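(* Let $X$ be a complete CAT(0) space and $(T_n)_{n\in\mathbb{N}}$ a family of self-mappings of $X$, each satisfying property $(P_2)$, with $F:=\bigcap_{n\in\mathbb{N}} Fix(T_n)\neq\emptyset$. For $x\in X$ let $x_0:=x$ and $x_{n+1}:=T_nx_n$ for all $n$. Let $(\gamma_n)$ be a sequence of positive reals with $\sum_{n=0}^\infty\gamma_n^2=\infty$. Assume: (C1) for all $n,m\in\mathbb{N}$ and all $w\in X$, $d(T_nw,T_mw)\le \frac{|\gamma_n-\gamma_m|}{\gamma_n}d(w,T_nw)$; (C2) the sequence $\left(\frac{d(x_n,x_{n+1})}{\gamma_n}\right)_{n}$ is nonincreasing. Then for every $m\in\mathbb{N}$, $\lim_{n\to\infty} d(x_n,T_mx_n)=0$.
   Context: A geodesic space $(X,d)$ is CAT(0) if for all $z\in X$, all geodesics $\gamma:[a,b]\to X$ and all $t\in[0,1]$, $d^2(z,\gamma((1-t)a+tb))\le(1-t)d^2(z,\gamma(a))+td^2(z,\gamma(b))-t(1-t)d^2(\gamma(a),\gamma(b))$. A mapping $T:X\to X$ satisfies property $(P_2)$ if for all $x,y\in X$, $2d^2(Tx,Ty)\le d^2(x,Ty)+d^2(y,Tx)-d^2(x,Tx)-d^2(y,Ty)$. $Fix(T)$ is the fixed point set of $T$. *)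

theory Defs
  imports "HOL-Analysis.Analysis"
begin

definition geodesic_on :: "real \<Rightarrow> real \<Rightarrow> (real \<Rightarrow> 'a::metric_space) \<Rightarrow> bool" where
  "geodesic_on a b g \<longleftrightarrow> a \<le> b \<and> (\<forall>s\<in>{a..b}. \<forall>t\<in>{a..b}. dist (g s) (g t) = \<bar>s - t\<bar>)"

definition geodesic_space :: "'a::metric_space itself \<Rightarrow> bool" where
  "geodesic_space _ \<longleftrightarrow> (\<forall>x y::'a. \<exists>a b g. geodesic_on a b g \<and> g a = x \<and> g b = y)"

definition CAT0 :: "'a::metric_space itself \<Rightarrow> bool" where
  "CAT0 T \<longleftrightarrow> geodesic_space T \<and>
     (\<forall>(z::'a) a b (g::real \<Rightarrow> 'a) t. geodesic_on a b g \<and> 0 \<le> t \<and> t \<le> 1 \<longrightarrow>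
        (dist z (g ((1 - t) * a + t * b)))\<^sup>2 \<le>
          (1 - t) * (dist z (g a))\<^sup>2 + t * (dist z (g b))\<^sup>2 - t * (1 - t) * (dist (g a) (g b))\<^sup>2)"

definition property_P2 :: "('a::metric_space \<Rightarrow> 'a) \<Rightarrow> bool" where
  "property_P2 T \<longleftrightarrow> (\<forall>x y. 2 * (dist (T x) (T y))\<^sup>2 \<le>
     (dist x (T y))\<^sup>2 + (dist y (T x))\<^sup>2 - (dist x (T x))\<^sup>2 - (dist y (T y))\<^sup>2)"

definition Fix :: "('a \<Rightarrow> 'a) \<Rightarrow> 'a set" where
  "Fix T = {x. T x = x}"

end

theory Submission
  imports Defs
begin

theorem proposition3p4:
  fixes T :: "nat \<Rightarrow> 'a::metric_space \<Rightarrow> 'a"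
    and x :: 'a and xs :: "nat \<Rightarrow> 'a" and \<gamma> :: "nat \<Rightarrow> real"
  assumes "CAT0 TYPE('a)"
    and "complete (UNIV :: 'a set)"
    and "\<And>n. property_P2 (T n)"
    and "(\<Inter>n. Fix (T n)) \<noteq> {}"
    and "xs 0 = x"
    and "\<And>n. xs (Suc n) = T n (xs n)"
    and "\<And>n. \<gamma> n > 0"
    and "\<not> summable (\<lambda>n. (\<gamma> n)\<^sup>2)"
    and C1: "\<And>n m w. dist (T n w) (T m w) \<le> \<bar>\<gamma> n - \<gamma> m\<bar> / \<gamma> n * dist w (T n w)"
    and C2: "decseq (\<lambda>n. dist (xs n) (xs (Suc n)) / \<gamma> n)"
  shows "\<forall>m. (\<lambda>n. dist (xs n) (T m (xs n))) \<longlonglongrightarrow> 0"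
proof
  fix m
  obtain p where p: "\<And>n. T n p = p" using assms(4) unfolding Fix_def by auto
  define d where "d n = dist (xs n) (xs (Suc n))" for n
  define a where "a n = d n / \<gamma> n" for n
  have step: "(dist (xs (Suc n)) p)\<^sup>2 \<le> (dist (xs n) p)\<^sup>2 - (d n)\<^sup>2" for n
  proof -
    have "2 * (dist (T n (xs n)) (T n p))\<^sup>2 \<le>
     (dist (xs n) (T n p))\<^sup>2 + (dist p (T n (xs n)))\<^sup>2 - (dist (xs n) (T n (xs n)))\<^sup>2 - (dist p (T n p))\<^sup>2"
      using assms(3) unfolding property_P2_def by blast
    then show ?thesis using p[of n] assms(6)[of n] unfolding d_def by (simp add: dist_commute)
  qed
  have bound: "(\<Sum>i<N. (d i)\<^sup>2) \<le> (dist (xs 0) p)\<^sup>2 - (dist (xs N) p)\<^sup>2" for N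
  proof (induction N)
    case 0 then show ?case by simp
  next
    case (Suc N) then show ?case using step[of N] by simp
  qed
  have "summable (\<lambda>n. (d n)\<^sup>2)"
  proof (rule summableI_nonneg_bounded)
    show "(\<Sum>i<n. (d i)\<^sup>2) \<le> (dist (xs 0) p)\<^sup>2" for n
      using bound[of n] by (smt (verit) zero_le_power2)
  qed simp
  then have "(\<lambda>n. (d n)\<^sup>2) \<longlonglongrightarrow> 0" by (rule summable_LIMSEQ_zero)
  then have "(\<lambda>n. sqrt ((d n)\<^sup>2)) \<longlonglongrightarrow> sqrt 0" by (rule tendsto_real_sqrt)
  moreover have "(\<lambda>n. sqrt ((d n)\<^sup>2)) = d" by (rule ext) (simp add: d_def)
  ultimately have dlim: "d \<longlonglongrightarrow> 0" by simp
  have apos: "\<forall>i. 0 \<le> a i" unfolding a_def d_def using assms(7) by (simp add: less_imp_le)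
  have dec: "decseq a" using C2 unfolding a_def d_def .
  obtain L where L: "a \<longlonglongrightarrow> L" "\<forall>i. L \<le> a i" using decseq_convergent[OF dec apos] by blast
  have "L \<le> 0"
  proof (rule ccontr)
    assume "\<not> L \<le> 0"
    then have Lp: "L > 0" by simp
    have sm: "summable (\<lambda>n. (d n)\<^sup>2 / L\<^sup>2)" using \<open>summable (\<lambda>n. (d n)\<^sup>2)\<close>
      by (rule summable_divide)
    have nb: "norm ((\<gamma> n)\<^sup>2) \<le> (d n)\<^sup>2 / L\<^sup>2" for n
    proof -
      have g: "\<gamma> n > 0" using assms(7) .
      have "L * \<gamma> n \<le> a n * \<gamma> n" using L(2) g by simp
      also have "\<dots> = d n" using g unfolding a_def by simp
      finally have "L * \<gamma> n \<le> d n" .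
      then have "(L * \<gamma> n)\<^sup>2 \<le> (d n)\<^sup>2" using Lp g
        by (intro power_mono) auto
      then show ?thesis using Lp by (simp add: field_simps power_mult_distrib)
    qed
    have "summable (\<lambda>n. (\<gamma> n)\<^sup>2)"
      using summable_comparison_test'[OF sm, where N=0 and f="\<lambda>n. (\<gamma> n)\<^sup>2"] nb by blast
    then show False using assms(8) by simp
  qed
  moreover have "0 \<le> L" using LIMSEQ_le_const[OF L(1), of 0] apos by blast
  ultimately have "L = 0" by simp
  with L(1) have alim: "a \<longlonglongrightarrow> 0" by simp
  have up: "dist (xs n) (T m (xs n)) \<le> 2 * d n + \<gamma> m * a n" for n
  proof -
    have g: "\<gamma> n > 0" "\<gamma> m > 0" using assms(7) by auto
    have e: "dist (xs n) (T n (xs n)) = d n" unfolding d_def using assms(6)[of n] by simp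
    have "dist (xs n) (T m (xs n)) \<le> dist (xs n) (T n (xs n)) + dist (T n (xs n)) (T m (xs n))"
      by (rule dist_triangle)
    also have "\<dots> \<le> d n + \<bar>\<gamma> n - \<gamma> m\<bar> / \<gamma> n * d n" using C1[where n=n and m=m and w="xs n"] e by simp
    also have "\<bar>\<gamma> n - \<gamma> m\<bar> / \<gamma> n * d n \<le> (\<gamma> n + \<gamma> m) / \<gamma> n * d n"
      using g by (intro mult_right_mono divide_right_mono) (auto simp: d_def)
    also have "(\<gamma> n + \<gamma> m) / \<gamma> n * d n = d n + \<gamma> m * a n"
      using g unfolding a_def by (simp add: field_simps)
    finally show ?thesis by simp
  qed
  have "(\<lambda>n. 2 * d n + \<gamma> m * a n) \<longlonglongrightarrow> 2 * 0 + \<gamma> m * 0"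
    by (intro tendsto_intros dlim alim)
  then have "(\<lambda>n. 2 * d n + \<gamma> m * a n) \<longlonglongrightarrow> 0" by simp
  show "(\<lambda>n. dist (xs n) (T m (xs n))) \<longlonglongrightarrow> 0"
  proof (rule tendsto_sandwich[where f="\<lambda>n. 0"])
    show "\<forall>\<^sub>F n in sequentially. 0 \<le> dist (xs n) (T m (xs n))" by simp
    show "\<forall>\<^sub>F n in sequentially. dist (xs n) (T m (xs n)) \<le> 2 * d n + \<gamma> m * a n"
      using up by simp
  qed (auto intro: \<open>(\<lambda>n. 2 * d n + \<gamma> m * a n) \<longlonglongrightarrow> 0\<close>)
qed

end
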